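(* Let $k\ge1$ and let $e_1,\dots,e_k,f_1,\dots,f_k$ be integers such that $e_1,e_2+1,\dots,e_k+k-1$ are distinct nonnegative integers and $f_1,f_2+1,\dots,f_k+k-1$ are distinct elements of $\{0,1,\dots,2k-1\}$. Let $c_1<c_2<\cdots<c_k$ be the elements of the complement $\{0,1,\dots,2k-1\}\setminus\{f_1,f_2+1,\dots,f_k+k-1\}$. Let $D$ be the $2k\times 2k$ determinant with entries, for $1\le i\le k$, $1\le j\le 2k$, $$D_{ij}=\Gamma(2k-i-j+2-e_i)^{-1},\qquad D_{k+i,j}=(-1)^{i+j-1}\Gamma(2k-i-j+2-f_i)^{-1}$$ (with $1/\Gamma(m)=0$ for $m\in\{0,-1,-2,\dots\}$). Then $$D=\operatorname{sgn}(f)\Bigl(\prod_{l=0}^{k-1}\frac{(e_{l+1}+l)!\,(f_{l+1}+l)!}{l!\,(k+l)!}\,2^{c_{l+1}-e_{l+1}-l}\Bigr)\det\Bigl(\binom{c_j}{e_i+i-1}\Bigr)_{1\le i,j\le k},$$ where $\operatorname{sgn}(f)$ is $(-1)$ raised to the number of transpositions needed to sort $f_1+1,f_2+2,\dots,f_k+k$ into increasing order. *)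

theory Defs
  imports "HOL-Analysis.Gamma_Function" "HOL-Combinatorics.Permutations"
    "Jordan_Normal_Form.Determinant"
begin

definition sort_perm :: "(nat \<Rightarrow> int) \<Rightarrow> nat \<Rightarrow> (nat \<Rightarrow> nat)" where
  "sort_perm g k = (THE p. p permutes {1..k} \<and>
      (\<forall>i\<in>{1..k}. \<forall>j\<in>{1..k}. i < j \<longrightarrow> g (p i) < g (p j)))"

text \<open>The 2k x 2k matrix D (1-based indices i, j of the paper correspond to a+1, b+1).\<close>
definition Dmat :: "nat \<Rightarrow> (nat \<Rightarrow> int) \<Rightarrow> (nat \<Rightarrow> int) \<Rightarrow> real mat" where
  "Dmat k e f = mat (2*k) (2*k) (\<lambda>(a,b).
     (let j = int b + 1 in
      if a < k then
        (let i = int a + 1 in rGamma (of_int (2*int k - i - j + 2 - e (a+1))))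
      else
        (let i = int a - int k + 1 in
          (-1) powi (i + j - 1) * rGamma (of_int (2*int k - i - j + 2 - f (a - k + 1))))))"

end

theory Submission
  imports Defs
begin



lemma sm_gap:
  assumes "strict_mono_on {0..<n} (g::nat\<Rightarrow>nat)" "i \<le> j" "j < n"
  shows "g i + (j - i) \<le> g j"
  using assms(2,3)
proof (induction j)
  case 0 then show ?case by simp
next
  case (Suc j)
  show ?case
  proof (cases "i = Suc j")
    case True then show ?thesis by simp
  next
    case False
    then have "i \<le> j" using Suc by simp
    then have "g i + (j - i) \<le> g j" using Suc by simp
    moreover have "g j < g (Suc j)" using assms(1) Suc(3) by (auto simp: strict_mono_on_def)
    ultimately show ?thesis using \<open>i \<le> j\<close> by linarith
  qed
qed

lemma sm_id:
  assumes "strict_mono_on {0..<n} (g::nat\<Rightarrow>nat)" "g ` {0..<n} \<subseteq> {0..<n}" "j < n"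
  shows "g j = j"
proof -
  have "g 0 + (j - 0) \<le> g j" by (rule sm_gap[OF assms(1)]) (use assms in auto)
  moreover have "g j + (n - 1 - j) \<le> g (n-1)" by (rule sm_gap[OF assms(1)]) (use assms in auto)
  moreover have "g (n-1) < n"
  proof -
    have "n - 1 \<in> {0..<n}" using assms by auto
    then show ?thesis using assms(2) by (meson atLeastLessThan_iff image_subset_iff)
  qed
  ultimately show ?thesis by linarith
qed

lemma unit_rows_det:
  fixes A :: "'a::comm_ring_1 mat" and \<beta> \<gamma> :: "nat \<Rightarrow> nat" and s :: "nat \<Rightarrow> 'a"
  assumes "A \<in> carrier_mat (p+q) (p+q)"
    and "strict_mono_on {0..<q} \<beta>" and "\<beta> ` {0..<q} \<subseteq> {0..<p+q}"
    and "\<And>i j. i < q \<Longrightarrow> j < p+q \<Longrightarrow> A $$ (p+i, j) = (if j = \<beta> i then s i else 0)"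
    and "strict_mono_on {0..<p} \<gamma>" and "\<gamma> ` {0..<p} = {0..<p+q} - \<beta> ` {0..<q}"
  shows "det A = (-1)^(\<Sum>i<q. p + i - \<beta> i) * (\<Prod>i<q. s i) * det (mat p p (\<lambda>(r,j). A $$ (r, \<gamma> j)))"
  using assms
proof (induction q arbitrary: A \<gamma>)
  case 0
  have g: "\<gamma> j = j" if "j < p" for j
    by (rule sm_id[OF 0(5)]) (use 0(6) that in auto)
  have "A = mat p p (\<lambda>(r,j). A $$ (r, \<gamma> j))"
    by (rule eq_matI) (use 0(1) g in auto)
  then show ?case by simp
next
  case (Suc q)
  define n where "n = p + q"
  define bq where "bq = \<beta> q"
  have A: "A \<in> carrier_mat (Suc n) (Suc n)" using Suc(2) by (simp add: n_def)
  have bq: "bq < Suc n" using Suc(4) unfolding image_subset_iff bq_def n_def by fastforce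
  have blt: "\<beta> i < bq" if "i < q" for i
    using Suc(3) that by (auto simp: strict_mono_on_def bq_def)
  have lastrow: "A $$ (n, j) = (if j = bq then s q else 0)" if "j < Suc n" for j
    using Suc(5)[of q j] that by (simp add: n_def bq_def)
  define A' where "A' = mat_delete A n bq"
  have A': "A' \<in> carrier_mat (p+q) (p+q)"
    using mat_delete_carrier[OF A] by (simp add: A'_def n_def)
  have "det A = (\<Sum>j<Suc n. A $$ (n,j) * cofactor A n j)"
    by (rule laplace_expansion_row[OF A]) simp
  also have "\<dots> = (\<Sum>j<Suc n. (if j = bq then s q * cofactor A n j else 0))"
    by (rule sum.cong) (auto simp: lastrow)
  also have "\<dots> = s q * cofactor A n bq" using bq by simp
  also have "\<dots> = s q * ((-1)^(n+bq) * det A')" by (simp add: cofactor_def A'_def)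
  finally have detA: "det A = s q * ((-1)^(n+bq) * det A')" .
  define \<gamma>' where "\<gamma>' = (\<lambda>j. if \<gamma> j < bq then \<gamma> j else \<gamma> j - 1)"
  have gne: "\<gamma> j \<noteq> bq" if "j < p" for j
  proof -
    have "\<gamma> j \<in> \<gamma> ` {0..<p}" using that by auto
    then show ?thesis using Suc(7) by (auto simp: bq_def)
  qed
  have glt: "\<gamma> j < Suc n" if "j < p" for j
  proof -
    have "\<gamma> j \<in> \<gamma> ` {0..<p}" using that by auto
    then show ?thesis using Suc(7) by (auto simp: n_def)
  qed
  have IH: "det A' = (-1)^(\<Sum>i<q. p + i - \<beta> i) * (\<Prod>i<q. s i) * det (mat p p (\<lambda>(r,j). A' $$ (r, \<gamma>' j)))"
  proof (rule Suc.IH[OF A'])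
    show "strict_mono_on {0..<q} \<beta>" using Suc(3) by (auto simp: strict_mono_on_def)
    show "\<beta> ` {0..<q} \<subseteq> {0..<p + q}" using blt bq by (force simp: n_def)
    show "A' $$ (p + i, j) = (if j = \<beta> i then s i else 0)" if "i < q" "j < p + q" for i j
    proof -
      have "A' $$ (p + i, j) = A $$ (p+i, if j < bq then j else Suc j)"
        using that A by (simp add: A'_def mat_delete_def n_def)
      also have "\<dots> = (if (if j < bq then j else Suc j) = \<beta> i then s i else 0)"
        using Suc(5)[of i "if j < bq then j else Suc j"] that by auto
      also have "\<dots> = (if j = \<beta> i then s i else 0)"
        using blt[OF that(1)] by auto
      finally show ?thesis .
    qed
    show "strict_mono_on {0..<p} \<gamma>'"
    proof (rule strict_mono_onI)
      fix r t assume rt: "r \<in> {0..<p}" "t \<in> {0..<p}" "r < t"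
      then have "\<gamma> r < \<gamma> t" using Suc(6) by (auto simp: strict_mono_on_def)
      moreover have "\<gamma> r \<noteq> bq" "\<gamma> t \<noteq> bq" using gne rt by auto
      ultimately show "\<gamma>' r < \<gamma>' t" by (auto simp: \<gamma>'_def)
    qed
    show "\<gamma>' ` {0..<p} = {0..<p + q} - \<beta> ` {0..<q}"
    proof (intro equalityI subsetI)
      fix x assume "x \<in> \<gamma>' ` {0..<p}"
      then obtain j where j: "j < p" "x = \<gamma>' j" by auto
      have "\<gamma> j \<in> \<gamma> ` {0..<p}" using j(1) by auto
      then have nb: "\<gamma> j \<notin> \<beta> ` {0..<Suc q}" using Suc(7) by auto
      show "x \<in> {0..<p + q} - \<beta> ` {0..<q}"
      proof (cases "\<gamma> j < bq")
        case True
        then show ?thesis using j nb bq by (auto simp: \<gamma>'_def n_def)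
      next
        case False
        then have "\<gamma> j > bq" using gne[OF j(1)] by simp
        then show ?thesis using j glt[OF j(1)] blt by (force simp: \<gamma>'_def n_def)
      qed
    next
      fix y assume y: "y \<in> {0..<p + q} - \<beta> ` {0..<q}"
      show "y \<in> \<gamma>' ` {0..<p}"
      proof (cases "y < bq")
        case True
        then have "y \<in> {0..<p + Suc q} - \<beta> ` {0..<Suc q}" using y by (auto simp: bq_def less_Suc_eq)
        then obtain j where j: "j < p" "\<gamma> j = y" using Suc(7) by (metis atLeastLessThan_iff imageE zero_le)
        then show ?thesis using True by (auto simp: \<gamma>'_def intro!: image_eqI[of _ _ j])
      next
        case False
        then have "Suc y \<in> {0..<p + Suc q} - \<beta> ` {0..<Suc q}" using y blt by (auto simp: bq_def less_Suc_eq) (metis Suc_lessD not_less_eq)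
        then obtain j where j: "j < p" "\<gamma> j = Suc y" using Suc(7) by (metis atLeastLessThan_iff imageE zero_le)
        then show ?thesis using False by (auto simp: \<gamma>'_def intro!: image_eqI[of _ _ j])
      qed
    qed
  qed
  have minor: "mat p p (\<lambda>(r,j). A' $$ (r, \<gamma>' j)) = mat p p (\<lambda>(r,j). A $$ (r, \<gamma> j))"
  proof (rule eq_matI)
    fix r j assume rj: "r < dim_row (mat p p (\<lambda>(r,j). A $$ (r, \<gamma> j)))" "j < dim_col (mat p p (\<lambda>(r,j). A $$ (r, \<gamma> j)))"
    then have r: "r < p" and j: "j < p" by auto
    have "\<gamma>' j < n" using glt[OF j] gne[OF j] bq by (auto simp: \<gamma>'_def)
    then have "A' $$ (r, \<gamma>' j) = A $$ (r, if \<gamma>' j < bq then \<gamma>' j else Suc (\<gamma>' j))"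
      using r A by (simp add: A'_def mat_delete_def n_def)
    also have "\<dots> = A $$ (r, \<gamma> j)" using gne[OF j] by (auto simp: \<gamma>'_def)
    finally show "mat p p (\<lambda>(r,j). A' $$ (r, \<gamma>' j)) $$ (r, j) = mat p p (\<lambda>(r,j). A $$ (r, \<gamma> j)) $$ (r, j)"
      using r j by simp
  qed auto
  have sgn: "(-1::'a)^(n+bq) = (-1)^(p + q - \<beta> q)"
  proof -
    have e: "n + bq = (p + q - \<beta> q) + 2 * bq" using bq by (simp add: n_def bq_def)
    have "(-1::'a)^(n+bq) = (-1)^(p+q-\<beta> q) * ((-1)^2)^bq" by (simp only: e power_add power_mult)
    then show ?thesis by simp
  qed
  show ?case
    unfolding detA IH minor sgn by (simp add: power_add bq_def)
qed



lemma sort_perm_spec: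
  fixes g :: "nat \<Rightarrow> int"
  assumes inj: "inj_on g {1..k}"
  shows "sort_perm g k permutes {1..k} \<and>
    (\<forall>i\<in>{1..k}. \<forall>j\<in>{1..k}. i < j \<longrightarrow> g (sort_perm g k i) < g (sort_perm g k j))"
proof -
  define L where "L = sorted_list_of_set (g ` {1..k})"
  have lenL: "length L = k" using card_image[OF inj] by (simp add: L_def)
  have setL: "set L = g`{1..k}" by (simp add: L_def)
  have sL: "sorted_wrt (<) L" by (simp add: L_def strict_sorted_list_of_set)
  have dL: "distinct L" by (simp add: L_def)
  let ?P = "\<lambda>p. p permutes {1..k} \<and> (\<forall>i\<in>{1..k}. \<forall>j\<in>{1..k}. i < j \<longrightarrow> g (p i) < g (p j))"
  have key: "g (p i) = L ! (i - 1)" if P: "?P p" and i: "i \<in> {1..k}" for p i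
  proof -
    define M where "M = map (\<lambda>i. g (p i)) [1..<k+1]"
    have lenM: "length M = k" by (simp add: M_def)
    have Mnth: "M ! j = g (p (j+1))" if "j < k" for j using that unfolding M_def by (subst nth_map) (simp_all del: upt_Suc)
    have sM: "sorted_wrt (<) M" unfolding sorted_wrt_iff_nth_less using P by (auto simp: lenM Mnth)
    have "set M = g ` p ` {1..k}" by (auto simp: M_def atLeastLessThanSuc_atLeastAtMost)
    also have "p ` {1..k} = {1..k}" using P permutes_image by blast
    finally have "set M = set L" using setL by simp
    then have "M = L"
      using sM sL by (metis sorted_list_of_set.idem_if_sorted_distinct strict_sorted_iff)
    then show ?thesis using Mnth[of "i-1"] i by auto
  qed
  have uniq: "p = q" if "?P p" "?P q" for p q
  proof
    fix x show "p x = q x"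
    proof (cases "x \<in> {1..k}")
      case True
      then have "g (p x) = g (q x)" using key that by metis
      moreover have "p x \<in> {1..k}" "q x \<in> {1..k}" using that True by (meson permutes_in_image)+
      ultimately show ?thesis using inj by (auto dest: inj_onD)
    next
      case False then show ?thesis using that by (metis permutes_not_in)
    qed
  qed
  define p where "p = (\<lambda>i. if i \<in> {1..k} then inv_into {1..k} g (L!(i-1)) else i)"
  have Lin: "L!(i-1) \<in> g ` {1..k}" if "i \<in> {1..k}" for i
    using that setL lenL by (metis atLeastAtMost_iff diff_less less_le_trans nth_mem zero_less_one le_less_trans less_one not_le)
  have pin: "p i \<in> {1..k}" if "i \<in> {1..k}" for i
  proof -
    have "p i = inv_into {1..k} g (L!(i-1))" using that by (simp only: p_def if_True)
    then show ?thesis using inv_into_into[OF Lin[OF that]] by metis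
  qed
  have gp: "g (p i) = L!(i-1)" if "i \<in> {1..k}" for i
  proof -
    have "p i = inv_into {1..k} g (L!(i-1))" using that by (simp only: p_def if_True)
    then show ?thesis using f_inv_into_f[OF Lin[OF that]] by metis
  qed
  have injp: "inj_on p {1..k}"
  proof (rule inj_onI)
    fix i j assume ij: "i \<in> {1..k}" "j \<in> {1..k}" "p i = p j"
    then have "L!(i-1) = L!(j-1)" using gp by metis
    then have "i - 1 = j - 1" 
    proof -
      have "i - 1 < length L" "j - 1 < length L" using lenL ij(1,2) by auto
      then show ?thesis using dL \<open>L!(i-1) = L!(j-1)\<close> nth_eq_iff_index_eq by blast
    qed
    then show "i = j" using ij by auto
  qed
  have imgp: "p ` {1..k} = {1..k}" by (rule endo_inj_surj) (use pin injp in auto)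
  have "p permutes {1..k}"
  proof (rule bij_imp_permutes)
    show "bij_betw p {1..k} {1..k}" unfolding bij_betw_def using injp imgp by blast
    show "p x = x" if "x \<notin> {1..k}" for x using that unfolding p_def by auto
  qed
  moreover have "\<forall>i\<in>{1..k}. \<forall>j\<in>{1..k}. i < j \<longrightarrow> g (p i) < g (p j)"
    using sL lenL by (auto simp: gp sorted_wrt_iff_nth_less)
  ultimately have "\<exists>!p. ?P p" using uniq by blast
  then show ?thesis unfolding sort_perm_def by (rule theI')
qed



lemma shift_sum:
  fixes w :: "nat \<Rightarrow> real" and u :: int
  assumes "u \<le> int K"
  shows "(\<Sum>s<K. w s * rGamma (of_int (u - int s)) * rGamma (of_int (int s - int t + 1))) =
    (if int t < u then (\<Sum>j\<le>nat (u - 1 - int t). w (t+j) * (inverse (fact (nat (u - 1 - int t) - j)) * inverse (fact j))) else 0)"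
proof -
  define N where "N = nat (u - 1 - int t)"
  define F where "F = (\<lambda>s. w s * rGamma (of_int (u - int s)) * rGamma (of_int (int s - int t + 1)))"
  have Fs: "F s = (if t \<le> s \<and> int s < u then w s * inverse (fact (nat (u - int s - 1))) * inverse (fact (s - t)) else 0)" for s
  proof -
    have "nat (int s - int t) = s - t" by simp
    then show ?thesis unfolding F_def rGamma_of_int by auto
  qed
  show ?thesis
  proof (cases "int t < u")
    case True
    have "(\<Sum>s<K. F s) = (\<Sum>s\<in>(\<lambda>j. t+j)`{..N}. F s)"
    proof (rule sum.mono_neutral_right)
      show "(\<lambda>j. t+j)`{..N} \<subseteq> {..<K}" using True assms by (auto simp: N_def)
      show "\<forall>i\<in>{..<K} - (\<lambda>j. t+j)`{..N}. F i = 0"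
      proof
        fix s assume s: "s \<in> {..<K} - (\<lambda>j. t+j)`{..N}"
        have "\<not> (t \<le> s \<and> int s < u)"
        proof
          assume h: "t \<le> s \<and> int s < u"
          then have "s = t + (s - t)" "s - t \<le> N" by (auto simp: N_def)
          then show False using s by blast
        qed
        then show "F s = 0" by (simp only: Fs if_False)
      qed
    qed simp
    also have "\<dots> = (\<Sum>j\<le>N. F (t+j))" by (rule sum.reindex_cong[of "\<lambda>j. t+j"]) auto
    also have "\<dots> = (\<Sum>j\<le>N. w (t+j) * (inverse (fact (N - j)) * inverse (fact j)))"
    proof (rule sum.cong)
      fix j assume "j \<in> {..N}"
      then have "t \<le> t + j" "int (t+j) < u" "nat (u - int (t+j) - 1) = N - j" using True by (auto simp: N_def)
      then show "F (t+j) = w (t+j) * (inverse (fact (N - j)) * inverse (fact j))" by (simp add: Fs)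
    qed simp
    finally show ?thesis using True by (simp add: F_def N_def)
  next
    case False
    then have "F s = 0" for s by (simp only: Fs) auto
    then have "(\<Sum>s<K. F s) = 0" by simp
    then show ?thesis using False by (simp only: F_def if_False)
  qed
qed

lemma sum_inv_fact:
  "(\<Sum>j\<le>N. inverse (fact (N - j)) * inverse (fact j) :: real) = 2 ^ N / fact N"
proof -
  have "(\<Sum>j\<le>N. inverse (fact (N - j)) * inverse (fact j) :: real) = (\<Sum>j\<le>N. real (N choose j) / fact N)"
    by (rule sum.cong) (auto simp: binomial_fact field_simps)
  also have "\<dots> = (\<Sum>j\<le>N. real (N choose j)) / fact N" by (simp add: sum_divide_distrib)
  also have "(\<Sum>j\<le>N. real (N choose j)) = 2 ^ N" using choose_row_sum[of N] by (metis of_nat_numeral of_nat_power of_nat_sum)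
  finally show ?thesis .
qed

lemma sum_alt_inv_fact:
  "(\<Sum>j\<le>N. (-1)^j * (inverse (fact (N - j)) * inverse (fact j)) :: real) = (if N = 0 then 1 else 0)"
proof -
  have "(\<Sum>j\<le>N. (-1)^j * (inverse (fact (N - j)) * inverse (fact j)) :: real) = (\<Sum>j\<le>N. (-1)^j * real (N choose j)) / fact N"
    unfolding sum_divide_distrib by (rule sum.cong) (auto simp: binomial_fact field_simps)
  also have "\<dots> = (if N = 0 then 1 else 0)"
    using choose_alternating_sum[of N, where ?'a = real] by auto
  finally show ?thesis .
qed



definition Xmat :: "nat \<Rightarrow> real mat" where
  "Xmat k = mat (2*k) (2*k) (\<lambda>(s,t). rGamma (of_int (int s - int t + 1)))"

lemma det_Xmat: "det (Xmat k) = 1"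
proof -
  have "det (Xmat k) = prod_list (diag_mat (Xmat k))"
  proof (rule det_lower_triangular)
    fix i j assume "i < j" "j < 2*k"
    then have "Xmat k $$ (i, j) = rGamma (of_int (int i - int j + 1))" unfolding Xmat_def by (subst index_mat) auto
    also have "\<dots> = 0" by (subst rGamma_of_int) (use \<open>i < j\<close> in auto)
    finally show "Xmat k $$ (i, j) = 0" .
  qed (simp add: Xmat_def)
  also have "diag_mat (Xmat k) = replicate (2*k) 1"
    by (rule nth_equalityI) (auto simp: diag_mat_def Xmat_def)
  finally show ?thesis by simp
qed

lemma prod_entry:
  assumes "r < 2*k" "t < 2*k"
  shows "(Dmat k e f * Xmat k) $$ (r,t) = (\<Sum>s<2*k. Dmat k e f $$ (r,s) * rGamma (of_int (int s - int t + 1)))"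
  using assms by (simp add: index_mult_mat scalar_prod_def Xmat_def Dmat_def lessThan_atLeast0)

lemma Y_e:
  assumes "r < k" "t < 2*k" "e (r+1) + int r \<ge> 0"
  shows "(Dmat k e f * Xmat k) $$ (r,t) =
    (if int t + (e (r+1) + int r) < 2*int k
     then 2 ^ nat (2*int k - 1 - (e (r+1) + int r) - int t) / fact (nat (2*int k - 1 - (e (r+1) + int r) - int t)) else 0)"
proof -
  define u where "u = 2 * int k - (e (r+1) + int r)"
  have D: "Dmat k e f $$ (r,s) = 1 * rGamma (of_int (u - int s))" if "s < 2*k" for s
    using that assms by (simp add: Dmat_def Let_def u_def algebra_simps)
  have "(Dmat k e f * Xmat k) $$ (r,t) = (\<Sum>s<2*k. 1 * rGamma (of_int (u - int s)) * rGamma (of_int (int s - int t + 1)))"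
    using assms by (simp add: prod_entry D)
  also have "\<dots> = (if int t < u then (\<Sum>j\<le>nat (u - 1 - int t). 1 * (inverse (fact (nat (u - 1 - int t) - j)) * inverse (fact j))) else 0)"
    by (rule shift_sum) (use assms in \<open>simp add: u_def\<close>)
  also have "\<dots> = (if int t < u then 2 ^ nat (u - 1 - int t) / fact (nat (u - 1 - int t)) else 0)"
    by (simp add: sum_inv_fact)
  finally show ?thesis by (simp add: u_def algebra_simps)
qed

lemma Y_f:
  assumes "i < k" "t < 2*k" "f (i+1) + int i \<ge> 0"
  shows "(Dmat k e f * Xmat k) $$ (k+i,t) =
    (if int t = 2*int k - 1 - (f (i+1) + int i) then (-1)^(i+1+t) else 0)"
proof -
  define u where "u = 2 * int k - (f (i+1) + int i)"
  have D: "Dmat k e f $$ (k+i,s) = (-1)^(i+1+s) * rGamma (of_int (u - int s))" if "s < 2*k" for s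
  proof -
    have "1 + (int i + int s) = int (1+i+s)" by simp
    then have pw: "(-1::real) powi (1 + (int i + int s)) = (-1)^(1+i+s)" by (simp only: power_int_of_nat)
    show ?thesis
      using that assms by (simp add: Dmat_def Let_def u_def algebra_simps pw)
  qed
  have "(Dmat k e f * Xmat k) $$ (k+i,t) = (\<Sum>s<2*k. (-1)^(i+1+s) * rGamma (of_int (u - int s)) * rGamma (of_int (int s - int t + 1)))"
    using assms by (simp add: prod_entry D)
  also have "\<dots> = (if int t < u then (\<Sum>j\<le>nat (u - 1 - int t). (-1)^(i+1+(t+j)) * (inverse (fact (nat (u - 1 - int t) - j)) * inverse (fact j))) else 0)"
    by (rule shift_sum) (use assms in \<open>simp add: u_def\<close>)
  also have "\<dots> = (if int t < u then (-1)^(i+1+t) * (\<Sum>j\<le>nat (u - 1 - int t). (-1)^j * (inverse (fact (nat (u - 1 - int t) - j)) * inverse (fact j))) else 0)"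
    by (simp add: sum_distrib_left power_add mult.assoc)
  also have "\<dots> = (if int t = u - 1 then (-1)^(i+1+t) else 0)"
    by (simp add: sum_alt_inv_fact)
  finally show ?thesis by (simp add: u_def algebra_simps)
qed



lemma det_permute_cols:
  assumes A: "A \<in> carrier_mat n n" and p: "p permutes {0..<n}"
  shows "det (mat n n (\<lambda>(i,j). A $$ (i, p j))) = signof p * det A"
proof -
  have At: "transpose_mat A \<in> carrier_mat n n" using A by simp
  have pin: "p j < n" if "j < n" for j using p that by (meson atLeastLessThan_iff permutes_in_image zero_le)
  have "mat n n (\<lambda>(i,j). A $$ (i, p j)) = transpose_mat (mat n n (\<lambda>(i,j). transpose_mat A $$ (p i, j)))"
    by (rule eq_matI) (use A pin in auto)
  then have "det (mat n n (\<lambda>(i,j). A $$ (i, p j))) = det (mat n n (\<lambda>(i,j). transpose_mat A $$ (p i, j)))"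
    by (simp add: det_transpose[of _ n])
  also have "\<dots> = signof p * det (transpose_mat A)" by (rule det_permute_rows[OF At p])
  also have "det (transpose_mat A) = det A" by (rule det_transpose[OF A])
  finally show ?thesis .
qed

lemma det_scale:
  fixes B :: "'a::comm_ring_1 mat"
  assumes B: "B \<in> carrier_mat n n"
  shows "det (mat n n (\<lambda>(i,j). u i * v j * B $$ (i,j))) = (\<Prod>i<n. u i) * (\<Prod>j<n. v j) * det B"
proof -
  have M: "mat n n (\<lambda>(i,j). u i * v j * B $$ (i,j)) \<in> carrier_mat n n" by simp
  have step: "signof p * (\<Prod>i=0..<n. mat n n (\<lambda>(i,j). u i * v j * B $$ (i,j)) $$ (i, p i)) =
     (\<Prod>i=0..<n. u i) * (\<Prod>j=0..<n. v j) * (signof p * (\<Prod>i=0..<n. B $$ (i, p i)))"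
    if p: "p permutes {0..<n}" for p
  proof -
    have pin: "p i < n" if "i < n" for i using that p by (meson atLeastLessThan_iff permutes_in_image zero_le)
    have "(\<Prod>i=0..<n. mat n n (\<lambda>(i,j). u i * v j * B $$ (i,j)) $$ (i, p i)) = (\<Prod>i=0..<n. u i * v (p i) * B $$ (i, p i))"
      by (rule prod.cong) (simp_all add: pin)
    also have "\<dots> = (\<Prod>i=0..<n. u i) * (\<Prod>i=0..<n. v (p i)) * (\<Prod>i=0..<n. B $$ (i, p i))"
      by (simp only: prod.distrib)
    also have "(\<Prod>i=0..<n. v (p i)) = (\<Prod>j=0..<n. v j)" using prod.permute[OF p, of v] by (simp add: comp_def)
    finally show ?thesis by (simp only: ac_simps)
  qed
  have "det (mat n n (\<lambda>(i,j). u i * v j * B $$ (i,j))) =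
    (\<Sum>p\<in>{p. p permutes {0..<n}}. (\<Prod>i=0..<n. u i) * (\<Prod>j=0..<n. v j) * (signof p * (\<Prod>i=0..<n. B $$ (i, p i))))"
    unfolding det_def'[OF M] by (rule sum.cong[OF refl], rule step) simp
  also have "\<dots> = (\<Prod>i=0..<n. u i) * (\<Prod>j=0..<n. v j) * det B"
    unfolding det_def'[OF B] by (simp only: sum_distrib_left)
  finally show ?thesis by (simp only: atLeast0LessThan)
qed



lemma entry_identity:
  fixes a C :: nat
  shows "(if a \<le> C then 2^(C-a)/fact(C-a) else 0 :: real) = fact a / 2^a * (2^C / fact C) * real (C choose a)"
proof (cases "a \<le> C")
  case True
  have C: "(2::real)^C = 2^a * 2^(C-a)" using True by (simp flip: power_add)
  show ?thesis using True by (simp add: binomial_fact C field_simps)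
next
  case False
  then show ?thesis by simp
qed

lemma sum_odd: "(\<Sum>i<n. 2*i+1) = n*(n::nat)"
  by (induction n) auto

lemma powi_split:
  fixes C :: nat and a :: int
  assumes "a \<ge> 0"
  shows "(2::real) powi (int C - a) = 2 ^ C / 2 ^ nat a"
proof -
  have "(2::real) powi (int C - a) = 2 powi int C / 2 powi int (nat a)" using assms by (simp add: power_int_diff)
  then show ?thesis by (simp only: power_int_of_nat)
qed

lemma prod_split_add: "(\<Prod>m<k+(n::nat). g m) = (\<Prod>m<k. g m) * (\<Prod>l<n. g (k+l) :: 'a::comm_monoid_mult)"
  by (induction n) (simp_all add: mult.assoc)

theorem lemma6:
  fixes k :: nat and e f :: "nat \<Rightarrow> int" and c :: "nat \<Rightarrow> nat"
  assumes "k \<ge> 1"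
    and "\<forall>i\<in>{1..k}. e i + int i - 1 \<ge> 0"
    and "inj_on (\<lambda>i. e i + int i - 1) {1..k}"
    and "\<forall>i\<in>{1..k}. 0 \<le> f i + int i - 1 \<and> f i + int i - 1 \<le> 2 * int k - 1"
    and "inj_on (\<lambda>i. f i + int i - 1) {1..k}"
    and "strict_mono_on {1..k} c"
    and "(\<lambda>j. int (c j)) ` {1..k} = {0..2 * int k - 1} - (\<lambda>i. f i + int i - 1) ` {1..k}"
  shows "det (Dmat k e f) =
    of_int (sign (sort_perm (\<lambda>i. f i + int i) k)) *
    (\<Prod>l<k. (fact (nat (e (l+1) + int l)) * fact (nat (f (l+1) + int l))
              / (fact l * fact (k + l))) *
            (2::real) powi (int (c (l+1)) - e (l+1) - int l)) *
    det (mat k k (\<lambda>(a,b). real (c (b+1) choose nat (e (a+1) + int (a+1) - 1))))"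
proof -
  define g where "g = (\<lambda>i. f i + int i)"
  define \<sigma> where "\<sigma> = sort_perm g k"
  have injg: "inj_on g {1..k}"
  proof (rule inj_onI)
    fix x y assume xy: "x \<in> {1..k}" "y \<in> {1..k}" "g x = g y"
    then have "(\<lambda>i. f i + int i - 1) x = (\<lambda>i. f i + int i - 1) y" by (simp add: g_def)
    then show "x = y" using inj_onD[OF assms(5)] xy(1,2) by blast
  qed
  have \<sigma>perm: "\<sigma> permutes {1..k}" and \<sigma>sort: "\<And>i j. i \<in> {1..k} \<Longrightarrow> j \<in> {1..k} \<Longrightarrow> i < j \<Longrightarrow> g (\<sigma> i) < g (\<sigma> j)"
    using sort_perm_spec[OF injg] unfolding \<sigma>_def by blast+
  have grange: "1 \<le> g x \<and> g x \<le> 2 * int k" if "x \<in> {1..k}" for x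
  proof -
    have "0 \<le> f x + int x - 1 \<and> f x + int x - 1 \<le> 2 * int k - 1" using assms(4) that by blast
    then show ?thesis unfolding g_def by linarith
  qed
  define rv where "rv = (\<lambda>i::nat. if i \<in> {1..k} then k + 1 - i else i)"
  have rvperm: "rv permutes {1..k}"
  proof (rule bij_imp_permutes)
    show "bij_betw rv {1..k} {1..k}"
      by (rule bij_betwI[where g=rv]) (auto simp: rv_def)
    show "rv x = x" if "x \<notin> {1..k}" for x using that unfolding rv_def by (simp only: if_False)
  qed
  define \<tau> where "\<tau> = \<sigma> \<circ> rv"
  have \<tau>perm: "\<tau> permutes {1..k}" unfolding \<tau>_def by (rule permutes_compose[OF rvperm \<sigma>perm])
  have \<tau>desc: "g (\<tau> j) < g (\<tau> i)" if "i \<in> {1..k}" "j \<in> {1..k}" "i < j" for i j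
  proof -
    have "rv j < rv i" "rv i \<in> {1..k}" "rv j \<in> {1..k}" using that by (auto simp: rv_def)
    then show ?thesis using \<sigma>sort by (simp add: \<tau>_def)
  qed
  have \<tau>in: "\<tau> x \<in> {1..k}" if "x \<in> {1..k}" for x using \<tau>perm that by (meson permutes_in_image)
  define \<beta> where "\<beta> = (\<lambda>i. nat (2 * int k - g (\<tau> (i+1))))"
  define \<gamma> where "\<gamma> = (\<lambda>j. 2*k - 1 - c (k - j))"
  define \<rho> where "\<rho> = (\<lambda>j::nat. if j < k then k - 1 - j else j)"
  define Y where "Y = Dmat k e f * Xmat k"
  have Ycar: "Y \<in> carrier_mat (2*k) (2*k)" unfolding Y_def Dmat_def Xmat_def by (rule mult_carrier_mat[of _ _ "2*k"]) (rule mat_carrier)+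
  have detY: "det Y = det (Dmat k e f)"
  proof -
    have "det Y = det (Dmat k e f) * det (Xmat k)"
      unfolding Y_def by (rule det_mult[of _ "2*k"]) (simp_all add: Dmat_def Xmat_def)
    then show ?thesis by (simp add: det_Xmat)
  qed
  define P where "P = (\<lambda>r. if k \<le> r \<and> r < 2*k then k + \<tau> (r - k + 1) - 1 else r)"
  define h where "h = (\<lambda>x::nat. x + k - 1)"
  have injh: "inj_on h {1..k}" by (auto simp: h_def inj_on_def)
  have himg: "h ` {1..k} = {k..<2*k}"
  proof (intro equalityI subsetI)
    fix x assume "x \<in> h ` {1..k}" then show "x \<in> {k..<2*k}" using assms(1) by (auto simp: h_def)
  next
    fix x assume x: "x \<in> {k..<2*k}"
    then have "x = h (x - k + 1)" "x - k + 1 \<in> {1..k}" using assms(1) by (auto simp: h_def)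
    then show "x \<in> h ` {1..k}" by blast
  qed
  have Pmap: "P = map_permutation {1..k} h \<tau>"
  proof
    fix r show "P r = map_permutation {1..k} h \<tau> r"
    proof (cases "k \<le> r \<and> r < 2*k")
      case True
      then have r: "r = h (r - k + 1)" "r - k + 1 \<in> {1..k}" using assms(1) by (auto simp: h_def)
      have "map_permutation {1..k} h \<tau> r = h (\<tau> (r - k + 1))"
        by (subst r(1), rule map_permutation_apply[OF injh r(2)])
      also have "\<dots> = P r" using True \<tau>in[OF r(2)] by (auto simp: h_def P_def)
      finally show ?thesis ..
    next
      case False
      then have "r \<notin> h ` {1..k}" using himg by auto
      then show ?thesis using False by (auto simp: P_def map_permutation_def restrict_id_def)
    qed
  qed
  have Pperm: "P permutes {0..<2*k}"
  proof -
    have "bij_betw h {1..k} {k..<2*k}" using injh himg by (simp add: bij_betw_def)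
    then have "P permutes {k..<2*k}" unfolding Pmap by (rule map_permutation_permutes[OF _ \<tau>perm])
    then show ?thesis by (rule permutes_subset) auto
  qed
  have signP: "sign P = sign \<tau>" unfolding Pmap by (rule sign_map_permutation[OF injh \<tau>perm]) simp
  define Z where "Z = mat (2*k) (2*k) (\<lambda>(r,t). Y $$ (P r, t))"
  have detZ: "det Z = signof P * det Y" unfolding Z_def by (rule det_permute_rows[OF Ycar Pperm])
  define s where "s = (\<lambda>i. (-1::real) ^ (\<tau> (i+1) + \<beta> i))"
  have crange: "c x \<le> 2*k - 1" "int (c x) \<notin> (\<lambda>i. f i + int i - 1) ` {1..k}" if "x \<in> {1..k}" for x
  proof -
    have "int (c x) \<in> (\<lambda>j. int (c j)) ` {1..k}" using that by blast
    then have "int (c x) \<in> {0..2 * int k - 1} - (\<lambda>i. f i + int i - 1) ` {1..k}" using assms(7) by simp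
    then show "c x \<le> 2*k - 1" "int (c x) \<notin> (\<lambda>i. f i + int i - 1) ` {1..k}" by auto
  qed
  have \<beta>mono: "strict_mono_on {0..<k} \<beta>"
  proof (rule strict_mono_onI)
    fix i j assume ij: "i \<in> {0..<k}" "j \<in> {0..<k}" "i < j"
    then have "g (\<tau> (j+1)) < g (\<tau> (i+1))" by (intro \<tau>desc) auto
    moreover have "g (\<tau> (i+1)) \<le> 2 * int k" using grange \<tau>in ij by auto
    ultimately show "\<beta> i < \<beta> j" unfolding \<beta>_def by linarith
  qed
  have \<beta>lt: "\<beta> i < 2*k" if "i < k" for i
  proof -
    have "1 \<le> g (\<tau> (i+1))" using grange \<tau>in that by auto
    then show ?thesis unfolding \<beta>_def using assms(1) by linarith
  qed
  have Zcar: "Z \<in> carrier_mat (k+k) (k+k)" by (simp add: Z_def mult_2)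
  have Pr: "P r = r" if "r < k" for r using that by (simp add: P_def)
  have Zf: "Z $$ (k+i, j) = (if j = \<beta> i then s i else 0)" if ij: "i < k" "j < k+k" for i j
  proof -
    define i' where "i' = \<tau> (i+1) - 1"
    have ti: "\<tau> (i+1) \<in> {1..k}" using \<tau>in ij by auto
    then have i'1: "i' + 1 = \<tau> (i+1)" and i'k: "i' < k" by (auto simp: i'_def)
    have "P (k+i) = k + i'" using ij ti by (auto simp: P_def i'_def)
    then have "Z $$ (k+i, j) = Y $$ (k + i', j)" using ij by (simp add: Z_def)
    also have "\<dots> = (if int j = 2*int k - 1 - (f (i'+1) + int i') then (-1)^(i'+1+j) else 0)"
      unfolding Y_def
    proof (rule Y_f)
      show "i' < k" by (rule i'k)
      show "j < 2*k" using ij by simp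
      have "0 \<le> f (i'+1) + int (i'+1) - 1" using assms(4) ti unfolding i'1[symmetric] by blast
      then show "0 \<le> f (i'+1) + int i'" by simp
    qed
    also have "\<dots> = (if j = \<beta> i then s i else 0)"
    proof -
      have "g (\<tau> (i+1)) = f (i'+1) + int i' + 1" unfolding g_def i'1[symmetric] by simp
      then have eq: "2*int k - 1 - (f (i'+1) + int i') = 2 * int k - g (\<tau> (i+1))" by linarith
      have "0 \<le> 2 * int k - g (\<tau> (i+1))" using grange ti by auto
      then have "(int j = 2 * int k - g (\<tau> (i+1))) = (j = \<beta> i)" unfolding \<beta>_def by auto
      then show ?thesis unfolding eq s_def using i'1 by auto
    qed
    finally show ?thesis .
  qed
  have \<gamma>mono: "strict_mono_on {0..<k} \<gamma>"
  proof (rule strict_mono_onI)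
    fix i j assume ij: "i \<in> {0..<k}" "j \<in> {0..<k}" "i < j"
    then have "k - j < k - i" "k - j \<in> {1..k}" "k - i \<in> {1..k}" by auto
    then have "c (k - j) < c (k - i)" using assms(6) by (simp add: strict_mono_onD)
    moreover have "c (k - i) \<le> 2*k - 1" using crange ij by auto
    ultimately show "\<gamma> i < \<gamma> j" unfolding \<gamma>_def by linarith
  qed
  have \<gamma>img: "\<gamma> ` {0..<k} = {0..<k+k} - \<beta> ` {0..<k}"
  proof (intro equalityI subsetI)
    fix x assume "x \<in> \<gamma> ` {0..<k}"
    then obtain j where j: "j < k" "x = \<gamma> j" by auto
    have kj: "k - j \<in> {1..k}" using j by auto
    have cl: "c (k-j) \<le> 2*k - 1" and cn: "int (c (k-j)) \<notin> (\<lambda>i. f i + int i - 1) ` {1..k}" using crange[OF kj] by auto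
    have "x < k + k" using j cl assms(1) by (simp add: \<gamma>_def)
    moreover have "x \<notin> \<beta> ` {0..<k}"
    proof
      assume "x \<in> \<beta> ` {0..<k}"
      then obtain i where i: "i < k" "x = \<beta> i" by auto
      have ti: "\<tau> (i+1) \<in> {1..k}" using \<tau>in i by auto
      have "int x = 2 * int k - g (\<tau> (i+1))" using i grange[OF ti] unfolding \<beta>_def by simp
      moreover have "int x = 2 * int k - 1 - int (c (k-j))" using j cl assms(1) unfolding \<gamma>_def by simp
      ultimately have "int (c (k-j)) = (\<lambda>i. f i + int i - 1) (\<tau> (i+1))" unfolding g_def by simp
      then show False using cn ti by blast
    qed
    ultimately show "x \<in> {0..<k+k} - \<beta> ` {0..<k}" by auto
  next
    fix x assume x: "x \<in> {0..<k+k} - \<beta> ` {0..<k}"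
    have xlt: "x < 2*k" and xnb: "x \<notin> \<beta> ` {0..<k}" using x by (auto simp: mult_2)
    define y where "y = 2*k - 1 - x"
    have xy: "x = 2*k - 1 - y" using xlt unfolding y_def by arith
    have iy: "int y = 2*int k - 1 - int x" using xlt unfolding y_def by (simp add: of_nat_diff)
    have "int y \<notin> (\<lambda>i. f i + int i - 1) ` {1..k}"
    proof
      assume "int y \<in> (\<lambda>i. f i + int i - 1) ` {1..k}"
      then obtain m where m: "m \<in> {1..k}" "int y = f m + int m - 1" by blast
      have "m \<in> \<tau> ` {1..k}" using permutes_image[OF \<tau>perm] m(1) by simp
      then obtain i where i: "i \<in> {1..k}" "\<tau> i = m" by blast
      have gx: "int x = 2 * int k - g m" using iy m(2) unfolding g_def by linarith
      have "\<beta> (i - 1) = nat (2 * int k - g m)" using i by (simp add: \<beta>_def)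
      also have "\<dots> = x" using gx by simp
      finally have "x = \<beta> (i - 1)" by simp
      moreover have "i - 1 \<in> {0..<k}" using i by auto
      ultimately show False using xnb by blast
    qed
    moreover have "int y \<in> {0..2 * int k - 1}" using iy xlt by auto
    ultimately have "int y \<in> {0..2 * int k - 1} - (\<lambda>i. f i + int i - 1) ` {1..k}" by blast
    then have "int y \<in> (\<lambda>j. int (c j)) ` {1..k}" using assms(7) by simp
    then obtain j' where j': "j' \<in> {1..k}" "int y = int (c j')" by blast
    have "\<gamma> (k - j') = 2*k - 1 - c j'" using j'(1) by (simp add: \<gamma>_def)
    also have "\<dots> = x" using j'(2) xy by simp
    finally have "x = \<gamma> (k - j')" by simp
    moreover have "k - j' \<in> {0..<k}" using j'(1) by auto
    ultimately show "x \<in> \<gamma> ` {0..<k}" by blast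
  qed
  have detZ2: "det Z = (-1)^(\<Sum>i<k. k + i - \<beta> i) * (\<Prod>i<k. s i) * det (mat k k (\<lambda>(r,j). Z $$ (r, \<gamma> j)))"
  proof (rule unit_rows_det[OF Zcar \<beta>mono _ _ \<gamma>mono \<gamma>img])
    show "\<beta> ` {0..<k} \<subseteq> {0..<k + k}" using \<beta>lt by (auto simp: mult_2)
    show "Z $$ (k + i, j) = (if j = \<beta> i then s i else 0)" if "i < k" "j < k + k" for i j
      using Zf that by blast
  qed
  define Bm where "Bm = mat k k (\<lambda>(a,b). real (c (b+1) choose nat (e (a+1) + int (a+1) - 1)))"
  define u where "u = (\<lambda>r. fact (nat (e (r+1) + int r)) / 2 ^ nat (e (r+1) + int r) :: real)"
  define v where "v = (\<lambda>j. 2 ^ c (j+1) / fact (c (j+1)) :: real)"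
  define Bs where "Bs = mat k k (\<lambda>(i,j). u i * v j * Bm $$ (i,j))"
  have minor: "mat k k (\<lambda>(r,j). Z $$ (r, \<gamma> j)) = mat k k (\<lambda>(r,j). Bs $$ (r, \<rho> j))"
  proof (rule eq_matI)
    fix r j assume "r < dim_row (mat k k (\<lambda>(r,j). Bs $$ (r, \<rho> j)))" "j < dim_col (mat k k (\<lambda>(r,j). Bs $$ (r, \<rho> j)))"
    then have r: "r < k" and j: "j < k" by auto
    define a where "a = nat (e (r+1) + int r)"
    define C where "C = c (k - j)"
    have ea: "e (r+1) + int r = int a"
    proof -
      have "r + 1 \<in> {1..k}" using r by auto
      then have "0 \<le> e (r+1) + int (r+1) - 1" using assms(2) by blast
      then show ?thesis unfolding a_def by simp
    qed
    have kj: "k - j \<in> {1..k}" using j by auto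
    have Cle: "C \<le> 2*k - 1" using crange[OF kj] by (simp add: C_def)
    have gj: "\<gamma> j = 2*k - 1 - C" by (simp add: \<gamma>_def C_def)
    have igj: "int (\<gamma> j) = 2 * int k - 1 - int C" using Cle assms(1) unfolding gj by (simp add: of_nat_diff)
    have gjlt: "\<gamma> j < 2*k" using assms(1) unfolding gj by arith
    have "Z $$ (r, \<gamma> j) = Y $$ (r, \<gamma> j)" using r gjlt by (simp add: Z_def Pr)
    also have "\<dots> = (if int (\<gamma> j) + (e (r+1) + int r) < 2*int k
     then 2 ^ nat (2*int k - 1 - (e (r+1) + int r) - int (\<gamma> j)) / fact (nat (2*int k - 1 - (e (r+1) + int r) - int (\<gamma> j))) else 0)"
      unfolding Y_def by (rule Y_e[OF r gjlt]) (simp only: ea of_nat_0_le_iff)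
    also have "\<dots> = (if a \<le> C then 2^(C-a)/fact(C-a) else 0)"
    proof -
      have c1: "(int (\<gamma> j) + (e (r+1) + int r) < 2*int k) = (a \<le> C)" unfolding igj ea by linarith
      have c2: "nat (2*int k - 1 - (e (r+1) + int r) - int (\<gamma> j)) = C - a" unfolding igj ea by linarith
      show ?thesis unfolding c1 c2 ..
    qed
    also have "\<dots> = fact a / 2^a * (2^C / fact C) * real (C choose a)" by (rule entry_identity)
    also have "\<dots> = Bs $$ (r, \<rho> j)"
    proof -
      have rj: "\<rho> j = k - 1 - j" "k - 1 - j < k" "k - 1 - j + 1 = k - j" using j by (auto simp: \<rho>_def)
      have "nat (e (r+1) + int (r+1) - 1) = a" unfolding a_def by simp
      then show ?thesis using r rj by (simp add: Bs_def Bm_def u_def v_def a_def C_def)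
    qed
    finally show "mat k k (\<lambda>(r,j). Z $$ (r, \<gamma> j)) $$ (r, j) = mat k k (\<lambda>(r,j). Bs $$ (r, \<rho> j)) $$ (r, j)"
      using r j by simp
  qed auto
  have \<rho>perm: "\<rho> permutes {0..<k}"
  proof (rule bij_imp_permutes)
    show "bij_betw \<rho> {0..<k} {0..<k}"
      by (rule bij_betwI[where g=\<rho>]) (auto simp: \<rho>_def)
    show "\<rho> x = x" if "x \<notin> {0..<k}" for x using that unfolding \<rho>_def by simp
  qed
  have detminor: "det (mat k k (\<lambda>(r,j). Z $$ (r, \<gamma> j))) = signof \<rho> * ((\<Prod>i<k. u i) * (\<Prod>j<k. v j) * det Bm)"
  proof -
    have "det (mat k k (\<lambda>(r,j). Bs $$ (r, \<rho> j))) = signof \<rho> * det Bs"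
      by (rule det_permute_cols[OF _ \<rho>perm]) (simp add: Bs_def)
    also have "det Bs = (\<Prod>i<k. u i) * (\<Prod>j<k. v j) * det Bm"
      unfolding Bs_def by (rule det_scale) (simp add: Bm_def)
    finally show ?thesis by (simp add: minor)
  qed
  have rvmap: "rv = map_permutation {0..<k} Suc \<rho>"
  proof
    fix x show "rv x = map_permutation {0..<k} Suc \<rho> x"
    proof (cases "x \<in> {1..k}")
      case True
      then have x: "x = Suc (x - 1)" "x - 1 \<in> {0..<k}" by auto
      have "map_permutation {0..<k} Suc \<rho> x = Suc (\<rho> (x - 1))"
        by (subst x(1), rule map_permutation_apply) (use x in auto)
      then show ?thesis using True by (auto simp: rv_def \<rho>_def)
    next
      case False
      then have "x \<notin> Suc ` {0..<k}" by auto
      then show ?thesis using False by (auto simp: rv_def map_permutation_def restrict_id_def)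
    qed
  qed
  have signrv: "sign rv = sign \<rho>" unfolding rvmap by (rule sign_map_permutation[OF _ \<rho>perm]) auto
  have signtau: "sign \<tau> = sign \<sigma> * sign rv" unfolding \<tau>_def
    by (rule sign_compose) (use \<sigma>perm rvperm in \<open>auto intro: permutes_imp_permutation\<close>)
  have \<beta>le: "\<beta> i \<le> k + i" if "i < k" for i
  proof -
    have "\<beta> i + (k - 1 - i) \<le> \<beta> (k - 1)" by (rule sm_gap[OF \<beta>mono]) (use that in auto)
    moreover have "\<beta> (k-1) < 2*k" using \<beta>lt assms(1) by simp
    ultimately show ?thesis using that by linarith
  qed
  have sumtau: "(\<Sum>i<k. \<tau> (i+1)) = (\<Sum>i<k. i+1)"
  proof -
    have "(\<Sum>i<k. \<tau> (i+1)) = (\<Sum>x\<in>{1..k}. \<tau> x)"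
      by (rule sum.reindex_bij_witness[of _ "\<lambda>x. x - 1" "\<lambda>i. i + 1"]) auto
    also have "\<dots> = (\<Sum>x\<in>{1..k}. x)" using sum.permute[OF \<tau>perm, of "\<lambda>x. x"] by (simp add: comp_def)
    also have "\<dots> = (\<Sum>i<k. i+1)"
      by (rule sum.reindex_bij_witness[of _ "\<lambda>i. i + 1" "\<lambda>x. x - 1"]) auto
    finally show ?thesis .
  qed
  have parity: "(-1::real)^(\<Sum>i<k. k + i - \<beta> i) * (\<Prod>i<k. s i) = 1"
  proof -
    have "(\<Prod>i<k. s i) = (-1::real)^(\<Sum>i<k. \<tau> (i+1) + \<beta> i)" unfolding s_def by (simp add: power_sum)
    then have "(-1::real)^(\<Sum>i<k. k + i - \<beta> i) * (\<Prod>i<k. s i) = (-1)^((\<Sum>i<k. k + i - \<beta> i) + (\<Sum>i<k. \<tau> (i+1) + \<beta> i))"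
      by (simp add: power_add)
    also have "(\<Sum>i<k. k + i - \<beta> i) + (\<Sum>i<k. \<tau> (i+1) + \<beta> i) = (\<Sum>i<k. k + i + \<tau> (i+1))"
      unfolding sum.distrib[symmetric] by (rule sum.cong) (use \<beta>le in auto)
    also have "\<dots> = (\<Sum>i<k. k + i) + (\<Sum>i<k. \<tau> (i+1))" by (simp only: sum.distrib)
    also have "\<dots> = (\<Sum>i<k. k + i) + (\<Sum>i<k. i + 1)" by (simp only: sumtau)
    also have "\<dots> = (\<Sum>i<k. k + (2*i+1))" unfolding sum.distrib[symmetric] by (rule sum.cong) auto
    also have "\<dots> = (\<Sum>i<k. k) + (\<Sum>i<k. 2*i+1)" by (rule sum.distrib)
    also have "\<dots> = 2 * (k * k)" unfolding sum_odd by simp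
    finally show ?thesis by (simp add: power_mult)
  qed
  have signs: "of_int (sign \<tau>) * (-1)^(\<Sum>i<k. k + i - \<beta> i) * (\<Prod>i<k. s i) * of_int (sign \<rho>) = (of_int (sign \<sigma>) :: real)"
  proof -
    have "of_int (sign \<tau>) * (-1)^(\<Sum>i<k. k + i - \<beta> i) * (\<Prod>i<k. s i) * of_int (sign \<rho>) =
      (of_int (sign \<sigma> * (sign \<rho> * sign \<rho>)) :: real) * ((-1::real)^(\<Sum>i<k. k + i - \<beta> i) * (\<Prod>i<k. s i))"
      unfolding signtau signrv by (simp only: of_int_mult mult_ac)
    moreover have "(of_int (sign \<sigma> * (sign \<rho> * sign \<rho>)) :: real) = of_int (sign \<sigma>)" by simp
    ultimately show ?thesis unfolding parity by simp
  qed
  define bn where "bn = (\<lambda>l. nat (f (l+1) + int l))"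
  have bnn: "0 \<le> f (l+1) + int l" "f (l+1) + int l \<le> 2 * int k - 1" if "l < k" for l
  proof -
    have "l + 1 \<in> {1..k}" using that by auto
    then have "0 \<le> f (l+1) + int (l+1) - 1 \<and> f (l+1) + int (l+1) - 1 \<le> 2 * int k - 1" using assms(4) by blast
    then show "0 \<le> f (l+1) + int l" "f (l+1) + int l \<le> 2 * int k - 1" by simp_all
  qed
  have ann: "0 \<le> e (l+1) + int l" if "l < k" for l
  proof -
    have "l + 1 \<in> {1..k}" using that by auto
    then have "0 \<le> e (l+1) + int (l+1) - 1" using assms(2) by blast
    then show ?thesis by simp
  qed
  have injB: "inj_on bn {..<k}"
  proof (rule inj_onI)
    fix x y assume xy: "x \<in> {..<k}" "y \<in> {..<k}" "bn x = bn y"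
    then have "f (x+1) + int x = f (y+1) + int y" using bnn[of x] bnn[of y] unfolding bn_def by auto
    then have "(\<lambda>i. f i + int i - 1) (x+1) = (\<lambda>i. f i + int i - 1) (y+1)" by simp
    moreover have "x + 1 \<in> {1..k}" "y + 1 \<in> {1..k}" using xy by auto
    ultimately have "x + 1 = y + 1" using inj_onD[OF assms(5)] by blast
    then show "x = y" by simp
  qed
  have injC: "inj_on c {1..k}" using assms(6) by (rule strict_mono_on_imp_inj_on)
  have disj: "bn ` {..<k} \<inter> c ` {1..k} = {}"
  proof (rule ccontr)
    assume "bn ` {..<k} \<inter> c ` {1..k} \<noteq> {}"
    then obtain l j where lj: "l < k" "j \<in> {1..k}" "bn l = c j" by blast
    then have "int (c j) = (\<lambda>i. f i + int i - 1) (l+1)" using bnn[OF lj(1)] unfolding bn_def by simp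
    moreover have "l + 1 \<in> {1..k}" using lj by auto
    ultimately show False using crange(2)[OF lj(2)] by blast
  qed
  have union: "bn ` {..<k} \<union> c ` {1..k} = {..<2*k}"
  proof (intro equalityI subsetI)
    fix x assume "x \<in> bn ` {..<k} \<union> c ` {1..k}"
    then show "x \<in> {..<2*k}"
    proof
      assume "x \<in> bn ` {..<k}"
      then obtain l where "l < k" "x = bn l" by blast
      then show ?thesis using bnn[of l] unfolding bn_def by auto
    next
      assume "x \<in> c ` {1..k}"
      then obtain j where "j \<in> {1..k}" "x = c j" by blast
      then show ?thesis using crange(1)[of j] assms(1) by auto
    qed
  next
    fix m assume m: "m \<in> {..<2*k}"
    show "m \<in> bn ` {..<k} \<union> c ` {1..k}"
    proof (cases "int m \<in> (\<lambda>i. f i + int i - 1) ` {1..k}")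
      case True
      then obtain i where i: "i \<in> {1..k}" "int m = f i + int i - 1" by blast
      then have "bn (i - 1) = m" unfolding bn_def by auto
      moreover have "i - 1 < k" using i by auto
      ultimately show ?thesis by blast
    next
      case False
      moreover have "int m \<in> {0..2 * int k - 1}" using m by auto
      ultimately have "int m \<in> {0..2 * int k - 1} - (\<lambda>i. f i + int i - 1) ` {1..k}" by blast
      then have "int m \<in> (\<lambda>j. int (c j)) ` {1..k}" using assms(7) by simp
      then obtain j where "j \<in> {1..k}" "m = c j" by auto
      then show ?thesis by blast
    qed
  qed
  have partition: "(\<Prod>l<k. fact (bn l)) * (\<Prod>l<k. fact (c (l+1))) = (\<Prod>l<k. fact l * fact (k+l) :: real)"
  proof -
    have "(\<Prod>l<k. fact l * fact (k+l) :: real) = (\<Prod>m<k+k. fact m)"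
      by (simp only: prod_split_add prod.distrib)
    also have "\<dots> = (\<Prod>m\<in>bn ` {..<k} \<union> c ` {1..k}. fact m)" using union by (simp add: mult_2)
    also have "\<dots> = (\<Prod>m\<in>bn ` {..<k}. fact m) * (\<Prod>m\<in>c ` {1..k}. fact m)"
      by (rule prod.union_disjoint) (use disj in auto)
    also have "(\<Prod>m\<in>bn ` {..<k}. fact m) = (\<Prod>l<k. fact (bn l) :: real)"
      using prod.reindex[OF injB, of fact] by simp
    also have "(\<Prod>m\<in>c ` {1..k}. fact m) = (\<Prod>j\<in>{1..k}. fact (c j) :: real)"
      using prod.reindex[OF injC, of fact] by simp
    also have "\<dots> = (\<Prod>l<k. fact (c (l+1)))"
      by (rule prod.reindex_bij_witness[of _ "\<lambda>l. l + 1" "\<lambda>j. j - 1"]) auto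
    finally show ?thesis by simp
  qed
  have prods: "(\<Prod>i<k. u i) * (\<Prod>j<k. v j) = (\<Prod>l<k. (fact (nat (e (l+1) + int l)) * fact (nat (f (l+1) + int l))
              / (fact l * fact (k + l))) * (2::real) powi (int (c (l+1)) - e (l+1) - int l))"
  proof -
    have tm: "(fact (nat (e (l+1) + int l)) * fact (nat (f (l+1) + int l))
              / (fact l * fact (k + l))) * (2::real) powi (int (c (l+1)) - e (l+1) - int l)
       = u l * v l * ((fact (bn l) * fact (c (l+1))) / (fact l * fact (k+l)))" if "l < k" for l
    proof -
      have "(2::real) powi (int (c (l+1)) - e (l+1) - int l) = 2 powi (int (c (l+1)) - (e (l+1) + int l))"
        by (simp add: algebra_simps)
      also have "\<dots> = 2 ^ c (l+1) / 2 ^ nat (e (l+1) + int l)" by (rule powi_split) (rule ann[OF that])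
      finally have pw: "(2::real) powi (int (c (l+1)) - e (l+1) - int l) = 2 ^ c (l+1) / 2 ^ nat (e (l+1) + int l)" .
      show ?thesis unfolding pw u_def v_def bn_def by (simp add: field_simps)
    qed
    have "(\<Prod>l<k. (fact (nat (e (l+1) + int l)) * fact (nat (f (l+1) + int l))
              / (fact l * fact (k + l))) * (2::real) powi (int (c (l+1)) - e (l+1) - int l))
        = (\<Prod>l<k. u l * v l * ((fact (bn l) * fact (c (l+1))) / (fact l * fact (k+l))))"
      by (rule prod.cong[OF refl], rule tm) simp
    also have "\<dots> = (\<Prod>l<k. u l) * (\<Prod>l<k. v l) * (((\<Prod>l<k. fact (bn l)) * (\<Prod>l<k. fact (c (l+1)))) / (\<Prod>l<k. fact l * fact (k+l)))"
      by (simp only: prod.distrib prod_dividef)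
    also have "\<dots> = (\<Prod>l<k. u l) * (\<Prod>l<k. v l)"
    proof -
      have "(\<Prod>l<k. fact l * fact (k+l) :: real) \<noteq> 0" by (simp add: prod_zero_iff)
      then show ?thesis unfolding partition by simp
    qed
    finally show ?thesis by simp
  qed
  have sPP: "(of_int (sign P)::real) * of_int (sign P) = 1" by (simp flip: of_int_mult)
  have "det (Dmat k e f) = of_int (sign P) * det Z"
  proof -
    have "det (Dmat k e f) = ((of_int (sign P)::real) * of_int (sign P)) * det Y" using detY sPP by simp
    also have "\<dots> = of_int (sign P) * det Z" using detZ by (simp only: mult.assoc)
    finally show ?thesis .
  qed
  also have "\<dots> = (of_int (sign \<tau>) * (-1)^(\<Sum>i<k. k + i - \<beta> i) * (\<Prod>i<k. s i) * of_int (sign \<rho>)) * ((\<Prod>i<k. u i) * (\<Prod>j<k. v j)) * det Bm"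
    unfolding detZ2 detminor signP by (simp only: mult.assoc)
  also have "\<dots> = of_int (sign \<sigma>) * (\<Prod>l<k. (fact (nat (e (l+1) + int l)) * fact (nat (f (l+1) + int l))
              / (fact l * fact (k + l))) * (2::real) powi (int (c (l+1)) - e (l+1) - int l)) * det Bm"
    unfolding signs prods ..
  finally show ?thesis unfolding Bm_def \<sigma>_def g_def .
qed

end
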